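(* Let $G$ and $H$ be Left dead-ends with $G\geq H$. Then the formal birthday of $G$ is at most the formal birthday of $H$.
   Context: Games are finite partizan games; $o(G)$ is the misère outcome class (ordered $\mathscr{L}>\mathscr{N}>\mathscr{R}$, $\mathscr{L}>\mathscr{P}>\mathscr{R}$). A universe is a set of games closed under options, disjunctive sums, conjugates, and forming $\{\mathscr{G}^L\mid\mathscr{G}^R\}$ from nonempty finite subsets of it; $G\geq_\mathcal{U}H$ means $o(G+X)\geq o(H+X)$ for all $X\in\mathcal{U}$. A Left dead-end is a game all of whose subpositions have no Left option. For Left dead-ends, $G\geq H$ means $G\geq_\mathcal{U}H$ for every universe $\mathcal{U}$. The formal birthday is the height of the game tree. *)

theory Defs
  imports Main
begin

datatype game = Game "game list" "game list"

fun leftopts :: "game \<Rightarrow> game list" where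
  "leftopts (Game L R) = L"

fun rightopts :: "game \<Rightarrow> game list" where
  "rightopts (Game L R) = R"

definition options :: "game \<Rightarrow> game set" where
  "options G = set (leftopts G) \<union> set (rightopts G)"

inductive subpos :: "game \<Rightarrow> game \<Rightarrow> bool" where
  subpos_refl: "subpos G G"
| subpos_step: "X \<in> options G \<Longrightarrow> subpos Y X \<Longrightarrow> subpos Y G"

definition left_dead_end :: "game \<Rightarrow> bool" where
  "left_dead_end G \<longleftrightarrow> (\<forall>X. subpos X G \<longrightarrow> leftopts X = [])"

text \<open>Misere play: a player unable to move wins.
  lwins_first G: Left wins G moving first; rwins_first G: Right wins G moving first.\<close>
fun lwins_first :: "game \<Rightarrow> bool" and rwins_first :: "game \<Rightarrow> bool" where
  "lwins_first (Game L R) \<longleftrightarrow> L = [] \<or> (\<exists>X\<in>set L. \<not> rwins_first X)"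
| "rwins_first (Game L R) \<longleftrightarrow> R = [] \<or> (\<exists>X\<in>set R. \<not> lwins_first X)"

datatype outcome = OL | ON | OP | OR

definition misere_outcome :: "game \<Rightarrow> outcome" where
  "misere_outcome G =
     (if lwins_first G then (if rwins_first G then ON else OL)
      else (if rwins_first G then OR else OP))"

text \<open>Order on outcomes: L > N > R and L > P > R (N, P incomparable).\<close>
definition outcome_ge :: "outcome \<Rightarrow> outcome \<Rightarrow> bool" where
  "outcome_ge a b \<longleftrightarrow> a = b \<or> a = OL \<or> b = OR"

fun conjugate :: "game \<Rightarrow> game" where
  "conjugate (Game L R) = Game (map conjugate R) (map conjugate L)"

lemma size_mem_le: "x \<in> set xs \<Longrightarrow> size x \<le> size_list size xs"
  by (induction xs) auto

function gsum :: "game \<Rightarrow> game \<Rightarrow> game" where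
  "gsum (Game GL GR) (Game HL HR) =
     Game (map (\<lambda>X. gsum X (Game HL HR)) GL @ map (\<lambda>Y. gsum (Game GL GR) Y) HL)
          (map (\<lambda>X. gsum X (Game HL HR)) GR @ map (\<lambda>Y. gsum (Game GL GR) Y) HR)"
  by pat_completeness auto
termination
  by (relation "measure (\<lambda>(G, H). size G + size H)")
     (auto dest!: size_mem_le)

definition universe :: "game set \<Rightarrow> bool" where
  "universe U \<longleftrightarrow>
     (\<forall>G\<in>U. options G \<subseteq> U) \<and>
     (\<forall>G\<in>U. \<forall>H\<in>U. gsum G H \<in> U) \<and>
     (\<forall>G\<in>U. conjugate G \<in> U) \<and>
     (\<forall>L R. L \<noteq> [] \<longrightarrow> R \<noteq> [] \<longrightarrow> set L \<subseteq> U \<longrightarrow> set R \<subseteq> U \<longrightarrow> Game L R \<in> U)"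

definition ge_in :: "game set \<Rightarrow> game \<Rightarrow> game \<Rightarrow> bool" where
  "ge_in U G H \<longleftrightarrow> (\<forall>X\<in>U. outcome_ge (misere_outcome (gsum G X)) (misere_outcome (gsum H X)))"

definition ge_all :: "game \<Rightarrow> game \<Rightarrow> bool" where
  "ge_all G H \<longleftrightarrow> (\<forall>U. universe U \<longrightarrow> ge_in U G H)"

fun birthday :: "game \<Rightarrow> nat" where
  "birthday (Game L R) = Max (insert 0 ((\<lambda>X. Suc (birthday X)) ` set (L @ R)))"

end

theory Submission
  imports Defs
begin

fun intg :: "nat \<Rightarrow> game" where
  "intg 0 = Game [] []"
| "intg (Suc m) = Game [intg m] []"

fun cg :: "nat \<Rightarrow> nat \<Rightarrow> game" where
  "cg M 0 = intg M"
| "cg M (Suc k) = Game [cg M k] [Game [] []]"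

lemma leftopts_gsum: "leftopts (gsum G H) = map (\<lambda>X. gsum X H) (leftopts G) @ map (gsum G) (leftopts H)"
  by (cases G; cases H) simp

lemma rightopts_gsum: "rightopts (gsum G H) = map (\<lambda>X. gsum X H) (rightopts G) @ map (gsum G) (rightopts H)"
  by (cases G; cases H) simp

lemma lwins_eq: "lwins_first G \<longleftrightarrow> leftopts G = [] \<or> (\<exists>X\<in>set (leftopts G). \<not> rwins_first X)"
  by (cases G) simp

lemma rwins_eq: "rwins_first G \<longleftrightarrow> rightopts G = [] \<or> (\<exists>X\<in>set (rightopts G). \<not> lwins_first X)"
  by (cases G) simp

lemma lde_left: "left_dead_end G \<Longrightarrow> leftopts G = []"
  unfolding left_dead_end_def by (blast intro: subpos_refl)

lemma lde_right: "left_dead_end G \<Longrightarrow> X \<in> set (rightopts G) \<Longrightarrow> left_dead_end X"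
proof -
  assume a: "left_dead_end G" "X \<in> set (rightopts G)"
  have "X \<in> options G" using a(2) by (simp add: options_def)
  then show ?thesis using a(1) unfolding left_dead_end_def using subpos_step by blast
qed

lemma bd_lt: "X \<in> set (rightopts G) \<Longrightarrow> birthday X < birthday G"
proof (cases G)
  case (Game L R)
  assume "X \<in> set (rightopts G)"
  then have "Suc (birthday X) \<in> insert 0 ((\<lambda>X. Suc (birthday X)) ` set (L @ R))"
    using Game by auto
  then have "Suc (birthday X) \<le> Max (insert 0 ((\<lambda>X. Suc (birthday X)) ` set (L @ R)))"
    by (intro Max_ge) auto
  then show ?thesis using Game by simp
qed

lemma bd_ex: "leftopts G = [] \<Longrightarrow> birthday G > 0 \<Longrightarrow> \<exists>X\<in>set (rightopts G). birthday G = Suc (birthday X)"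
proof (cases G)
  case (Game L R)
  assume a: "leftopts G = []" "birthday G > 0"
  let ?S = "insert 0 ((\<lambda>X. Suc (birthday X)) ` set (L @ R))"
  have "Max ?S \<in> ?S" by (intro Max_in) auto
  moreover have "Max ?S \<noteq> 0" using a Game by simp
  ultimately show ?thesis using a Game by auto
qed

lemma lemA: "left_dead_end G \<Longrightarrow> birthday G \<le> M \<Longrightarrow> rwins_first (gsum G (intg M))"
proof (induction M arbitrary: G)
  case 0
  have "rightopts G = []"
  proof (rule ccontr)
    assume "rightopts G \<noteq> []"
    then obtain X where "X \<in> set (rightopts G)" by (cases "rightopts G") auto
    from bd_lt[OF this] 0 show False by simp
  qed
  then show ?case by (simp add: rwins_eq rightopts_gsum)
next
  case (Suc m)
  show ?case
  proof (cases "rightopts G")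
    case Nil
    then show ?thesis by (simp add: rwins_eq rightopts_gsum)
  next
    case (Cons X xs)
    then have X: "X \<in> set (rightopts G)" by simp
    have "rwins_first (gsum X (intg m))"
      using Suc.IH[OF lde_right[OF Suc.prems(1) X]] bd_lt[OF X] Suc.prems(2) by simp
    then have "\<not> lwins_first (gsum X (intg (Suc m)))"
      using lde_left[OF lde_right[OF Suc.prems(1) X]]
      by (simp add: lwins_eq leftopts_gsum)
    then show ?thesis using X by (auto simp: rwins_eq rightopts_gsum)
  qed
qed

lemma lemB: "left_dead_end G \<Longrightarrow> k \<le> birthday G \<Longrightarrow> birthday G \<le> M + k \<Longrightarrow> rwins_first (gsum G (cg M k))"
proof (induction k arbitrary: G)
  case 0
  then show ?case using lemA by simp
next
  case (Suc j)
  obtain X where X: "X \<in> set (rightopts G)" "birthday G = Suc (birthday X)"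
    using bd_ex[OF lde_left[OF Suc.prems(1)]] Suc.prems(2) by auto
  have "rwins_first (gsum X (cg M j))"
    using Suc.IH[OF lde_right[OF Suc.prems(1) X(1)]] X(2) Suc.prems by simp
  then have "\<not> lwins_first (gsum X (cg M (Suc j)))"
    using lde_left[OF lde_right[OF Suc.prems(1) X(1)]]
    by (simp add: lwins_eq leftopts_gsum)
  then show ?case using X by (auto simp: rwins_eq rightopts_gsum)
qed

lemma lemC: "left_dead_end H \<Longrightarrow> birthday H < k \<Longrightarrow> \<not> rwins_first (gsum H (cg M k))"
proof (induction k arbitrary: H)
  case 0
  then show ?case by simp
next
  case (Suc j)
  have h0: "lwins_first (gsum H (Game [] []))"
    using lde_left[OF Suc.prems(1)] by (simp add: lwins_eq leftopts_gsum)
  have h1: "lwins_first (gsum X (cg M (Suc j)))" if X: "X \<in> set (rightopts H)" for X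
  proof -
    have "\<not> rwins_first (gsum X (cg M j))"
      using Suc.IH[OF lde_right[OF Suc.prems(1) X]] bd_lt[OF X] Suc.prems(2) by simp
    then show ?thesis using lde_left[OF lde_right[OF Suc.prems(1) X]]
      by (simp add: lwins_eq leftopts_gsum)
  qed
  show ?case using h0 h1 by (auto simp: rwins_eq rightopts_gsum)
qed

lemma univ_UNIV: "universe UNIV"
  by (simp add: universe_def)

theorem mainTheorem12:
  assumes "left_dead_end G" and "left_dead_end H" and "ge_all G H"
  shows "birthday G \<le> birthday H"
proof (rule ccontr)
  assume "\<not> birthday G \<le> birthday H"
  then have lt: "birthday H < birthday G" by simp
  define X where "X = cg (birthday G) (Suc (birthday H))"
  have a: "rwins_first (gsum G X)" unfolding X_def
    using lemB[OF assms(1), of "Suc (birthday H)" "birthday G"] lt by (simp del: cg.simps)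
  have b: "\<not> rwins_first (gsum H X)" unfolding X_def
    using lemC[OF assms(2), of "Suc (birthday H)" "birthday G"] by (simp del: cg.simps)
  have "outcome_ge (misere_outcome (gsum G X)) (misere_outcome (gsum H X))"
    using assms(3) univ_UNIV unfolding ge_all_def ge_in_def by blast
  then show False using a b
    by (auto simp: outcome_ge_def misere_outcome_def split: if_splits)
qed

end
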